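(* Let $G$ be a torsion-free acylindrically hyperbolic group and let $g\in G$ be a generalised loxodromic element. Then $g$ is chiral, i.e. there is no $n\geq1$ such that $g^n$ is conjugate to $g^{-n}$.
   Context: An action of $G$ on a metric space $X$ is acylindrical if for every $r\in\mathbb{N}$ there exist $R,N\in\mathbb{N}$ such that for all $x,y\in X$ with $d(x,y)\ge R$, the number of $g\in G$ with $\max\{d(x,gx),d(y,gy)\}\le r$ is at most $N$. $G$ is acylindrically hyperbolic if it admits a non-elementary acylindrical action on a Gromov-hyperbolic space; an element of $G$ that acts loxodromically for some such action is called a generalised loxodromic element. *)

theory Defs
  imports "HOL-Analysis.Analysis" "HOL-Algebra.Group_Action"
begin

definition gromov_product :: "('b \<Rightarrow> 'b \<Rightarrow> real) \<Rightarrow> 'b \<Rightarrow> 'b \<Rightarrow> 'b \<Rightarrow> real" where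
  "gromov_product d w x y = (d w x + d w y - d x y) / 2"

definition gromov_hyperbolic :: "'b set \<Rightarrow> ('b \<Rightarrow> 'b \<Rightarrow> real) \<Rightarrow> bool" where
  "gromov_hyperbolic X d \<longleftrightarrow> Metric_space X d \<and>
     (\<exists>\<delta>\<ge>0. \<forall>w\<in>X. \<forall>x\<in>X. \<forall>y\<in>X. \<forall>z\<in>X.
        gromov_product d w x z \<ge> min (gromov_product d w x y) (gromov_product d w y z) - \<delta>)"

definition isometric_action :: "('g, 'm) monoid_scheme \<Rightarrow> 'b set \<Rightarrow> ('b \<Rightarrow> 'b \<Rightarrow> real) \<Rightarrow> ('g \<Rightarrow> 'b \<Rightarrow> 'b) \<Rightarrow> bool" where
  "isometric_action G X d \<phi> \<longleftrightarrow> group_action G X \<phi> \<and>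
     (\<forall>g\<in>carrier G. \<forall>x\<in>X. \<forall>y\<in>X. d (\<phi> g x) (\<phi> g y) = d x y)"

definition acylindrical :: "('g, 'm) monoid_scheme \<Rightarrow> 'b set \<Rightarrow> ('b \<Rightarrow> 'b \<Rightarrow> real) \<Rightarrow> ('g \<Rightarrow> 'b \<Rightarrow> 'b) \<Rightarrow> bool" where
  "acylindrical G X d \<phi> \<longleftrightarrow>
     (\<forall>r::nat. \<exists>R N::nat. \<forall>x\<in>X. \<forall>y\<in>X. d x y \<ge> real R \<longrightarrow>
        (let S = {g \<in> carrier G. max (d x (\<phi> g x)) (d y (\<phi> g y)) \<le> real r}
         in finite S \<and> card S \<le> N))"

text \<open>Sequences converging to infinity (Gromov sequences) and their equivalence;
  equivalence classes are the points of the Gromov boundary.\<close>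
definition converges_at_infinity :: "('b \<Rightarrow> 'b \<Rightarrow> real) \<Rightarrow> 'b \<Rightarrow> (nat \<Rightarrow> 'b) \<Rightarrow> bool" where
  "converges_at_infinity d w s \<longleftrightarrow>
     (\<forall>K::real. \<exists>N. \<forall>m\<ge>N. \<forall>n\<ge>N. gromov_product d w (s m) (s n) \<ge> K)"

definition equiv_at_infinity :: "('b \<Rightarrow> 'b \<Rightarrow> real) \<Rightarrow> 'b \<Rightarrow> (nat \<Rightarrow> 'b) \<Rightarrow> (nat \<Rightarrow> 'b) \<Rightarrow> bool" where
  "equiv_at_infinity d w s t \<longleftrightarrow>
     (\<forall>K::real. \<exists>N. \<forall>m\<ge>N. \<forall>n\<ge>N. gromov_product d w (s m) (t n) \<ge> K)"

text \<open>Non-elementary action: the limit set (accumulation points in the Gromov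
  boundary of an orbit) has more than two points.\<close>
definition non_elementary :: "('g, 'm) monoid_scheme \<Rightarrow> 'b set \<Rightarrow> ('b \<Rightarrow> 'b \<Rightarrow> real) \<Rightarrow> ('g \<Rightarrow> 'b \<Rightarrow> 'b) \<Rightarrow> bool" where
  "non_elementary G X d \<phi> \<longleftrightarrow>
     (\<exists>w\<in>X. \<exists>s1 s2 s3 :: nat \<Rightarrow> 'b.
        (\<forall>n. s1 n \<in> orbit G \<phi> w \<and> s2 n \<in> orbit G \<phi> w \<and> s3 n \<in> orbit G \<phi> w) \<and>
        converges_at_infinity d w s1 \<and> converges_at_infinity d w s2 \<and> converges_at_infinity d w s3 \<and>
        \<not> equiv_at_infinity d w s1 s2 \<and> \<not> equiv_at_infinity d w s1 s3 \<and>
        \<not> equiv_at_infinity d w s2 s3)"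

definition loxodromic :: "('g, 'm) monoid_scheme \<Rightarrow> 'b set \<Rightarrow> ('b \<Rightarrow> 'b \<Rightarrow> real) \<Rightarrow> ('g \<Rightarrow> 'b \<Rightarrow> 'b) \<Rightarrow> 'g \<Rightarrow> bool" where
  "loxodromic G X d \<phi> g \<longleftrightarrow> g \<in> carrier G \<and>
     (\<exists>x\<in>X. \<exists>L\<ge>1. \<exists>c\<ge>0. \<forall>m n :: int.
        \<bar>real_of_int (m - n)\<bar> / L - c \<le> d (\<phi> (g [^]\<^bsub>G\<^esub> m) x) (\<phi> (g [^]\<^bsub>G\<^esub> n) x) \<and>
        d (\<phi> (g [^]\<^bsub>G\<^esub> m) x) (\<phi> (g [^]\<^bsub>G\<^esub> n) x) \<le> L * \<bar>real_of_int (m - n)\<bar> + c)"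

definition torsion_free :: "('g, 'm) monoid_scheme \<Rightarrow> bool" where
  "torsion_free G \<longleftrightarrow> (\<forall>x\<in>carrier G. \<forall>n::nat. n \<ge> 1 \<longrightarrow> x [^]\<^bsub>G\<^esub> n = \<one>\<^bsub>G\<^esub> \<longrightarrow> x = \<one>\<^bsub>G\<^esub>)"

definition chiral :: "('g, 'm) monoid_scheme \<Rightarrow> 'g \<Rightarrow> bool" where
  "chiral G g \<longleftrightarrow> \<not> (\<exists>n::nat. n \<ge> 1 \<and> (\<exists>h\<in>carrier G.
      h \<otimes>\<^bsub>G\<^esub> (g [^]\<^bsub>G\<^esub> n) \<otimes>\<^bsub>G\<^esub> inv\<^bsub>G\<^esub> h = inv\<^bsub>G\<^esub> (g [^]\<^bsub>G\<^esub> n)))"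

end

theory Submission
  imports Defs
begin


lemma ex_switch: "P (0::nat) \<Longrightarrow> \<not> P k \<Longrightarrow> \<exists>j<k. P j \<and> \<not> P (Suc j)"
  by (induction k) (auto, metis less_Suc_eq)

locale hypsp =
  fixes X :: "'b set" and d :: "'b \<Rightarrow> 'b \<Rightarrow> real" and \<delta> :: real
  assumes ms: "Metric_space X d"
    and dpos: "\<delta> \<ge> 0"
    and hyp: "\<forall>w\<in>X. \<forall>x\<in>X. \<forall>y\<in>X. \<forall>z\<in>X.
        gromov_product d w x z \<ge> min (gromov_product d w x y) (gromov_product d w y z) - \<delta>"
begin

lemma dcom: "d x y = d y x" using ms Metric_space.commute by metis
lemma dnn: "d x y \<ge> 0" using ms Metric_space.nonneg by metis
lemma dzero: "x \<in> X \<Longrightarrow> d x x = 0" using ms Metric_space.zero by metis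
lemma dtri: "x \<in> X \<Longrightarrow> y \<in> X \<Longrightarrow> z \<in> X \<Longrightarrow> d x z \<le> d x y + d y z"
  using ms Metric_space.triangle by metis

lemma fp:
  assumes "w \<in> X" "x \<in> X" "y \<in> X" "z \<in> X"
  shows "d w x + d w z - d x z + 2*\<delta> \<ge> d w x + d w y - d x y \<or>
         d w x + d w z - d x z + 2*\<delta> \<ge> d w y + d w z - d y z"
proof -
  have "gromov_product d w x z \<ge> min (gromov_product d w x y) (gromov_product d w y z) - \<delta>"
    using hyp assms by blast
  then have "gromov_product d w x z \<ge> gromov_product d w x y - \<delta> \<or> gromov_product d w x z \<ge> gromov_product d w y z - \<delta>"
    by linarith
  then show ?thesis unfolding gromov_product_def by (auto simp: field_simps)
qed

end

locale hchain = hypsp +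
  fixes q :: "nat \<Rightarrow> 'b" and S :: "nat \<Rightarrow> real"
  assumes qX: "\<And>i. q i \<in> X"
    and qS: "\<And>i k. d (q i) (q (i + k)) = S k"
begin

lemma dq1: "i \<le> j \<Longrightarrow> d (q i) (q j) = S (j - i)"
  using qS[of i "j - i"] by simp
lemma dq2: "i \<le> j \<Longrightarrow> d (q j) (q i) = S (j - i)"
  using dq1 dcom by metis

lemma S0: "S 0 = 0" using qS[of 0 0] dzero qX by simp
lemma Snn: "S k \<ge> 0" using qS[of 0 k] dnn by metis
lemma Ssub: "S (a + b) \<le> S a + S b"
  using dtri[OF qX[of 0] qX[of a] qX[of "a+b"]] dq1[of 0 a] dq1[of 0 "a+b"] dq1[of a "a+b"] by simp

context
  assumes big: "S 2 - S 1 > 3*\<delta>"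
begin

lemma last_step: "S (Suc k) + S 1 - S (k+2) \<le> 2*S 1 - S 2 + 2*\<delta>"
proof (induction k)
  case 0 then show ?case using dpos by (simp add: numeral_2_eq_2)
next
  case (Suc k)
  have f: "d (q (k+2)) (q (k+1)) + d (q (k+2)) (q (k+3)) - d (q (k+1)) (q (k+3)) + 2*\<delta> \<ge> d (q (k+2)) (q (k+1)) + d (q (k+2)) (q 0) - d (q (k+1)) (q 0) \<or>
         d (q (k+2)) (q (k+1)) + d (q (k+2)) (q (k+3)) - d (q (k+1)) (q (k+3)) + 2*\<delta> \<ge> d (q (k+2)) (q 0) + d (q (k+2)) (q (k+3)) - d (q 0) (q (k+3))"
    by (rule fp) (auto simp: qX)
  have e: "d (q (k+2)) (q (k+1)) = S 1" "d (q (k+2)) (q (k+3)) = S 1" "d (q (k+1)) (q (k+3)) = S 2"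
     "d (q (k+2)) (q 0) = S (k+2)" "d (q (k+1)) (q 0) = S (k+1)" "d (q 0) (q (k+3)) = S (k+3)"
    by (simp_all add: dq1 dq2)
  show ?case using f Suc big dpos unfolding e by (auto simp: numeral_3_eq_3 numeral_2_eq_2)
qed

lemma S2le: "S 2 \<le> 2 * S 1"
  using Ssub[of 1 1] by (simp add: numeral_2_eq_2)

definition "E2 = 2*S 1 - S 2 + 4*\<delta>"

lemma E2nn: "E2 \<ge> 0" using S2le dpos unfolding E2_def by simp

lemma middle: "S i + S j - S (i + j) \<le> E2"
proof (cases "i = 0 \<or> j = 0")
  case True then show ?thesis using S0 E2nn by auto
next
  case False
  then obtain i' j' where ij: "i = Suc i'" "j = Suc j'" by (metis not0_implies_Suc)
  have L1: "S i' + S 1 - S i \<le> 2*S 1 - S 2 + 2*\<delta> \<or> i' = 0"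
    using last_step[of "i' - 1"] ij by (cases i') auto
  have L2: "S j' + S 1 - S j \<le> 2*S 1 - S 2 + 2*\<delta> \<or> j' = 0"
    using last_step[of "j' - 1"] ij by (cases j') auto
  have f1: "d (q i) (q i') + d (q i) (q (i+1)) - d (q i') (q (i+1)) + 2*\<delta> \<ge> d (q i) (q i') + d (q i) (q 0) - d (q i') (q 0) \<or>
         d (q i) (q i') + d (q i) (q (i+1)) - d (q i') (q (i+1)) + 2*\<delta> \<ge> d (q i) (q 0) + d (q i) (q (i+1)) - d (q 0) (q (i+1))"
    by (rule fp) (auto simp: qX)
  have f2: "d (q i) (q 0) + d (q i) (q (i+1)) - d (q 0) (q (i+1)) + 2*\<delta> \<ge> d (q i) (q 0) + d (q i) (q (i+j)) - d (q 0) (q (i+j)) \<or>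
         d (q i) (q 0) + d (q i) (q (i+1)) - d (q 0) (q (i+1)) + 2*\<delta> \<ge> d (q i) (q (i+j)) + d (q i) (q (i+1)) - d (q (i+j)) (q (i+1))"
    by (rule fp) (auto simp: qX)
  have e: "d (q i) (q i') = S 1" "d (q i) (q (i+1)) = S 1" "d (q i') (q (i+1)) = S 2"
    "d (q i) (q 0) = S i" "d (q i') (q 0) = S i'" "d (q 0) (q (i+1)) = S (i+1)"
    "d (q i) (q (i+j)) = S j" "d (q 0) (q (i+j)) = S (i+j)" "d (q (i+j)) (q (i+1)) = S j'"
    using ij by (simp_all add: dq1 dq2)
  have Si: "i' = 0 \<Longrightarrow> S i = S 1" "j' = 0 \<Longrightarrow> S j = S 1" using ij by auto
  have S1: "S 1 \<ge> 0" by (rule Snn)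
  from f1 f2 L1 L2 show ?thesis unfolding e E2_def
  proof (elim disjE)
    qed (use big S2le dpos S0 S1 Si in \<open>auto\<close>)
qed

lemma crossing:
  assumes yX: "y \<in> X" and hy: "d y (q 0) + d y (q (2*m)) \<le> 2 * S m + 2*\<delta>"
  shows "\<exists>j. d y (q j) \<le> 3/2 * E2 + 3*\<delta> + S 1"
proof -
  define P where "P j \<longleftrightarrow> S j + d (q j) y - d (q 0) y \<le> E2 + 2*\<delta>" for j
  have PQ: "P j \<or> d (q j) y + S (2*m - j) - d y (q (2*m)) \<le> E2 + 2*\<delta>" if "j \<le> 2*m" for j
  proof -
    have f: "d (q j) (q 0) + d (q j) (q (2*m)) - d (q 0) (q (2*m)) + 2*\<delta> \<ge> d (q j) (q 0) + d (q j) y - d (q 0) y \<or>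
         d (q j) (q 0) + d (q j) (q (2*m)) - d (q 0) (q (2*m)) + 2*\<delta> \<ge> d (q j) y + d (q j) (q (2*m)) - d y (q (2*m))"
      by (rule fp) (auto simp: qX yX)
    have e: "d (q j) (q 0) = S j" "d (q j) (q (2*m)) = S (2*m - j)" "d (q 0) (q (2*m)) = S (2*m)"
      using that by (simp_all add: dq1 dq2)
    have "S j + S (2*m - j) - S (2*m) \<le> E2" using middle[of j "2*m - j"] that by simp
    then show ?thesis using f unfolding e P_def by linarith
  qed
  have mm: "S m + S m - S (2*m) \<le> E2" using middle[of m m] unfolding mult_2 .
  show ?thesis
  proof (cases "P (2*m)")
    case True
    then have "S (2*m) + d (q (2*m)) y - d (q 0) y \<le> E2 + 2*\<delta>" unfolding P_def .
    moreover have "d (q (2*m)) y = d y (q (2*m))" "d (q 0) y = d y (q 0)" by (rule dcom)+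
    ultimately have "d y (q (2*m)) \<le> E2 + 2*\<delta>" using hy mm by linarith
    moreover have "E2 + 2*\<delta> \<le> 3/2 * E2 + 3*\<delta> + S 1" using E2nn Snn[of 1] dpos by linarith
    ultimately have "d y (q (2*m)) \<le> 3/2 * E2 + 3*\<delta> + S 1" by linarith
    then show ?thesis by blast
  next
    case False
    have "P 0" using S0 dpos E2nn by (simp add: P_def)
    then obtain j where j: "j < 2*m" "P j" "\<not> P (Suc j)" using ex_switch[of P "2*m"] False by blast
    have Q: "d (q (Suc j)) y + S (2*m - Suc j) - d y (q (2*m)) \<le> E2 + 2*\<delta>"
      using PQ[of "Suc j"] j by linarith
    have t1: "d (q j) y \<le> S 1 + d (q (Suc j)) y"
      using dtri[OF qX[of j] qX[of "Suc j"] yX] dq1[of j "Suc j"] by simp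
    have t2: "S (2*m - 1) \<le> S j + S (2*m - Suc j)" using Ssub[of j "2*m - Suc j"] j by simp
    have t3: "S (2*m) \<le> S (2*m - 1) + S 1" using Ssub[of "2*m - 1" 1] j by simp
    have "d (q j) y \<le> 3/2 * E2 + 3*\<delta> + S 1"
    proof -
      have "d (q (2*m)) y = d y (q (2*m))" "d (q 0) y = d y (q 0)" by (rule dcom)+
      then show ?thesis using j(2) Q t1 t2 t3 hy mm unfolding P_def by linarith
    qed
    then have "d y (q j) \<le> 3/2 * E2 + 3*\<delta> + S 1" by (simp add: dcom)
    then show ?thesis by blast
  qed
qed

end
end

lemma exp_beats_lin: "\<exists>j::nat. A + B * real j < 2 ^ j"
proof -
  obtain k::nat where k: "real k \<ge> \<bar>A\<bar> + 2*\<bar>B\<bar> + 1" by (meson real_arch_simple)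
  have k1: "real k \<ge> 1" using k by linarith
  have "k < 2^k" by (rule less_exp)
  then have "real k + 1 \<le> 2^k" by (metis Suc_leI of_nat_Suc of_nat_le_iff of_nat_numeral of_nat_power add.commute)
  then have "(real k + 1)^2 \<le> (2^k)^2" by (rule power_mono) simp
  also have "... = (2::real)^(2*k)" by (simp add: power_mult mult.commute)
  finally have p: "(real k + 1)^2 \<le> 2^(2*k)" .
  have q: "(real k + 1)^2 = real k * real k + 2 * real k + 1" by (simp add: power2_eq_square algebra_simps)
  have r: "(\<bar>A\<bar> + 2*\<bar>B\<bar> + 1) * real k \<le> real k * real k" using k by (intro mult_right_mono) auto
  have s: "\<bar>A\<bar> \<le> \<bar>A\<bar> * real k" using k1 by (metis abs_ge_zero mult_le_cancel_left1 not_le order_less_le_trans zero_less_one)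
  have t: "A + B * real (2*k) \<le> \<bar>A\<bar> + 2*\<bar>B\<bar> * real k"
  proof -
    have "B * real (2*k) \<le> \<bar>B\<bar> * real (2*k)" by (intro mult_right_mono) auto
    then show ?thesis by simp
  qed
  have "A + B * real (2*k) < 2^(2*k)" using p q r s t by (simp add: algebra_simps)
  then show ?thesis by blast
qed


lemma big_nat: "(L::real) > 0 \<Longrightarrow> \<exists>k::nat. B < real k / L"
proof -
  assume L: "L > 0"
  obtain k::nat where "L * B < real k" using reals_Archimedean2 by blast
  then have "B < real k / L" using L by (simp add: pos_less_divide_eq mult.commute)
  then show ?thesis by blast
qed

lemma (in group) conj_hom: "h \<in> carrier G \<Longrightarrow> (\<lambda>y. h \<otimes> y \<otimes> inv h) \<in> hom G G"
proof -
  assume h: "h \<in> carrier G"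
  have c: "inv h \<otimes> (h \<otimes> z) = z" if "z \<in> carrier G" for z
    using h that by (metis inv_closed l_inv l_one m_assoc)
  show ?thesis unfolding hom_def using h c by (auto simp: m_assoc)
qed

lemma (in group) conj_int_pow:
  assumes "h \<in> carrier G" "b \<in> carrier G"
  shows "h \<otimes> b [^] (t::int) \<otimes> inv h = (h \<otimes> b \<otimes> inv h) [^] t"
  using hom_int_pow[OF conj_hom[OF assms(1)] assms(2) is_group is_group] by simp

lemma (in group) conj_nat_pow:
  assumes "h \<in> carrier G" "b \<in> carrier G"
  shows "h \<otimes> b [^] (t::nat) \<otimes> inv h = (h \<otimes> b \<otimes> inv h) [^] t"
  using hom_nat_pow[OF conj_hom[OF assms(1)] assms(2) is_group is_group] by simp

lemma (in group) conj_shift: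
  assumes "h \<in> carrier G" "y \<in> carrier G" "h \<otimes> y \<otimes> inv h = z" "z \<in> carrier G"
  shows "h \<otimes> y = z \<otimes> h"
  using assms by (metis inv_closed l_inv m_assoc m_closed r_one)

lemma (in group) torsion_one:
  assumes "torsion_free G" "w \<in> carrier G" "w [^] (k::nat) = \<one>" "k \<ge> 1"
  shows "w = \<one>"
  using assms unfolding torsion_free_def by blast

lemma (in group) main_helper:
  fixes X :: "'p set" and d :: "'p \<Rightarrow> 'p \<Rightarrow> real" and \<phi> :: "'a \<Rightarrow> 'p \<Rightarrow> 'p"
  assumes tf: "torsion_free G"
    and gh: "gromov_hyperbolic X d"
    and ia: "isometric_action G X d \<phi>"
    and ac: "acylindrical G X d \<phi>"
    and lx: "loxodromic G X d \<phi> g"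
    and n1: "n \<ge> 1" and hC: "h \<in> carrier G"
    and hc: "h \<otimes> (g [^] (n::nat)) \<otimes> inv h = inv (g [^] n)"
  shows False
proof -
  have ga: "group_action G X \<phi>" and iso: "\<And>g x y. g \<in> carrier G \<Longrightarrow> x \<in> X \<Longrightarrow> y \<in> X \<Longrightarrow> d (\<phi> g x) (\<phi> g y) = d x y"
    using ia unfolding isometric_action_def by auto
  interpret A: group_action G X \<phi> by (rule ga)
  obtain \<delta> where ms: "Metric_space X d" and dpos: "\<delta> \<ge> 0" and hyp: "\<forall>w\<in>X. \<forall>x\<in>X. \<forall>y\<in>X. \<forall>z\<in>X.
        gromov_product d w x z \<ge> min (gromov_product d w x y) (gromov_product d w y z) - \<delta>"
    using gh unfolding gromov_hyperbolic_def by blast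
  interpret H: hypsp X d \<delta> by (rule hypsp.intro[OF ms dpos hyp])
  obtain x L c where gC: "g \<in> carrier G" and xX: "x \<in> X" and L: "L \<ge> 1" and c: "c \<ge> 0"
    and qi: "\<And>m n::int. \<bar>real_of_int (m - n)\<bar> / L - c \<le> d (\<phi> (g [^] m) x) (\<phi> (g [^] n) x)"
    using lx unfolding loxodromic_def by blast
  have L0: "L > 0" using L by simp
  have phi1: "\<phi> \<one> y = y" if "y \<in> X" for y
    using A.id_eq_one that by (metis restrict_apply')
  have phiX: "\<phi> a y \<in> X" if "a \<in> carrier G" "y \<in> X" for a y
    using A.element_image that by blast
  have comp: "\<phi> (a1 \<otimes> a2) y = \<phi> a1 (\<phi> a2 y)" if "a1 \<in> carrier G" "a2 \<in> carrier G" "y \<in> X" for a1 a2 y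
    using A.composition_rule that by blast
  have U: "real k / L - c \<le> d x (\<phi> (g [^] k) x)" for k :: nat
  proof -
    have "\<bar>real_of_int (int k - 0)\<bar> / L - c \<le> d (\<phi> (g [^] (int k)) x) (\<phi> (g [^] (0::int)) x)"
      by (rule qi)
    then show ?thesis using phi1[OF xX] H.dcom by (simp add: int_pow_int)
  qed
  have gne: "g \<noteq> \<one>"
  proof
    assume g1: "g = \<one>"
    obtain k::nat where "c < real k / L" using big_nat[OF L0] by blast
    moreover have "d x (\<phi> (g [^] k) x) = 0" using g1 phi1[OF xX] H.dzero[OF xX] by simp
    ultimately show False using U[of k] by simp
  qed
  have Ubig: "\<exists>k::nat. B \<le> d x (\<phi> ((g [^] N) [^] k) x)" if "N \<ge> 1" for B and N :: nat
  proof -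
    obtain k::nat where k: "B + c < real k / L" using big_nat[OF L0] by blast
    have "k \<le> N * k" using that by simp
    then have "real k \<le> real (N * k)" by (simp only: of_nat_le_iff)
    then have "real k / L \<le> real (N * k) / L" using L0 by (simp add: divide_right_mono)
    then have "B \<le> d x (\<phi> (g [^] (N*k)) x)" using U[of "N*k"] k by linarith
    then show ?thesis using nat_pow_pow[OF gC] by metis
  qed
  define V where "V j = d x (\<phi> (g [^] (n * 2^j)) x)" for j :: nat
  have "\<exists>j. V (Suc j) - V j > 3*\<delta>"
  proof (rule ccontr)
    assume "\<not> ?thesis"
    then have st0: "V (Suc j) - V j \<le> 3*\<delta>" for j by (simp add: not_less)
    have st: "V (Suc j) \<le> V j + 3*\<delta>" for j using st0[of j] by linarith
    have up: "V j \<le> V 0 + 3*\<delta>*real j" for j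
    proof (induction j)
      case (Suc j)
      have "3*\<delta>*real (Suc j) = 3*\<delta>*real j + 3*\<delta>" by (simp add: algebra_simps)
      then show ?case using st[of j] Suc by linarith
    qed simp
    obtain j::nat where j: "L * (V 0 + c) + (L*3*\<delta>) * real j < 2^j" using exp_beats_lin by blast
    have "real (n*2^j) / L - c \<le> V j" using U unfolding V_def by blast
    moreover have "real (2^j) \<le> real (n*2^j)" using n1 by simp
    then have "real (2^j) / L \<le> real (n*2^j) / L" using L0 by (simp add: divide_right_mono)
    ultimately have "real (2^j) / L - c \<le> V j" by linarith
    then have "2^j / L - c \<le> V j" by simp
    then have "2^j / L \<le> V j + c" by linarith
    then have "2^j \<le> (V j + c) * L" using L0 by (simp only: pos_divide_le_eq)
    then have "2^j \<le> L * (V j + c)" by (simp only: mult.commute)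
    moreover have "L * (V j + c) \<le> L * (V 0 + 3*\<delta>*real j + c)" using up[of j] L0 by simp
    moreover have "L * (V 0 + 3*\<delta>*real j + c) = L * (V 0 + c) + (L*3*\<delta>) * real j"
      by (simp add: algebra_simps)
    ultimately show False using j by linarith
  qed
  then obtain j where jbig: "V (Suc j) - V j > 3*\<delta>" by blast
  define N where "N = n * 2^j"
  have N1: "N \<ge> 1" using n1 unfolding N_def by simp
  define b where "b = g [^] N"
  have bC: "b \<in> carrier G" unfolding b_def using gC by simp
  define q where "q k = \<phi> (b [^] k) x" for k :: nat
  define S where "S k = d x (q k)" for k :: nat
  have qX: "q k \<in> X" for k unfolding q_def using phiX bC xX by simp
  have q0: "q 0 = x" unfolding q_def using phi1 xX by simp
  have qS: "d (q i) (q (i + k)) = S k" for i k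
  proof -
    have "q (i + k) = \<phi> (b [^] i) (q k)" unfolding q_def using comp bC xX by (simp add: nat_pow_mult[symmetric])
    then show ?thesis unfolding S_def using iso[of "b [^] i" x "q k"] q_def bC xX qX by simp
  qed
  have S12: "S 2 - S 1 > 3*\<delta>"
  proof -
    have "S 1 = V j" unfolding S_def q_def V_def b_def N_def using gC by simp
    moreover have "S 2 = V (Suc j)" unfolding S_def q_def V_def b_def N_def using gC
      by (simp add: nat_pow_pow mult.commute mult.left_commute)
    ultimately show ?thesis using jbig by simp
  qed
  interpret C: hchain X d \<delta> q S
    by (intro hchain.intro H.hypsp_axioms hchain_axioms.intro qX qS)
  have gnC: "g [^] n \<in> carrier G" using gC by simp
  have hb: "h \<otimes> b \<otimes> inv h = inv b"
  proof -
    have "b = (g [^] n) [^] (2^j::nat)" unfolding b_def N_def using gC by (simp add: nat_pow_pow)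
    then have "h \<otimes> b \<otimes> inv h = (h \<otimes> g [^] n \<otimes> inv h) [^] (2^j::nat)"
      using conj_nat_pow[OF hC gnC] by simp
    also have "\<dots> = inv ((g [^] n) [^] (2^j::nat))" using hc nat_pow_inv[OF gnC] by simp
    also have "\<dots> = inv b" unfolding b_def N_def using gC by (simp add: nat_pow_pow)
    finally show ?thesis .
  qed
  have hbt: "h \<otimes> b [^] t \<otimes> inv h = inv (b [^] t)" for t :: int
    using conj_int_pow[OF hC bC, of t] hb int_pow_inv[OF bC] by simp
  have hbi: "h \<otimes> inv b \<otimes> inv h = b"
    using hbt[of "-1"] bC by (simp add: int_pow_neg)
  define f where "f = h \<otimes> h"
  have fC: "f \<in> carrier G" unfolding f_def using hC by simp
  have fb: "f \<otimes> b = b \<otimes> f"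
  proof -
    have e1: "h \<otimes> b = inv b \<otimes> h" using conj_shift[OF hC bC hb] bC by simp
    have e2: "h \<otimes> inv b = b \<otimes> h" using conj_shift[OF hC _ hbi] bC by simp
    have "f \<otimes> b = h \<otimes> (h \<otimes> b)" unfolding f_def using hC bC by (simp add: m_assoc)
    also have "\<dots> = (h \<otimes> inv b) \<otimes> h" using e1 hC bC by (simp add: m_assoc)
    also have "\<dots> = b \<otimes> f" using e2 hC bC unfolding f_def by (simp add: m_assoc)
    finally show ?thesis .
  qed
  have fbk: "f [^] i \<otimes> b [^] k = b [^] k \<otimes> f [^] i" for i k :: nat
  proof -
    have "b [^] k \<otimes> f = f \<otimes> b [^] k" using group_commutes_pow[OF fb[symmetric] bC fC] .
    then show ?thesis using group_commutes_pow[of f "b [^] k" i] fC bC by simp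
  qed
  define Cc where "Cc = 3/2 * C.E2 + 3*\<delta> + S 1"
  have near: "\<exists>t::int. d x (\<phi> (b [^] t \<otimes> f [^] i) x) \<le> Cc" for i :: nat
  proof -
    define z where "z = \<phi> (f [^] i) x"
    have zX: "z \<in> X" unfolding z_def using phiX fC xX by simp
    have zS: "d z (\<phi> (b [^] k) z) = S k" for k :: nat
    proof -
      have "\<phi> (b [^] k) z = \<phi> (f [^] i) (q k)"
        unfolding z_def q_def using comp fC bC xX fbk[of i k] by (metis nat_pow_closed)
      then show ?thesis unfolding z_def S_def using iso fC xX qX by simp
    qed
    obtain m::nat where m: "d z x \<le> S m"
      using Ubig[OF N1, of "d z x"] unfolding S_def q_def b_def by blast
    define y where "y = \<phi> (b [^] m) z"
    have yX: "y \<in> X" unfolding y_def using phiX bC zX by simp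
    have fp: "d z (q m) + d y (q 0) \<le> d y (q m) + d z (q 0) + 2*\<delta> \<or> d z (q m) + d y (q 0) \<le> d y z + d (q 0) (q m) + 2*\<delta>"
      using H.fp[OF yX zX qX[of 0] qX[of m]] H.dcom by (smt (verit))
    have e1: "d y (q m) = d z x"
      unfolding y_def q_def using iso bC zX xX by simp
    have e2: "d y z = S m" using zS[of m] H.dcom unfolding y_def by metis
    have e3: "d (q 0) (q m) = S m" "d z (q 0) = d z x" using q0 S_def by auto
    have e4: "d y (q (2*m)) = d z (q m)"
    proof -
      have "q (2*m) = \<phi> (b [^] m) (q m)" unfolding q_def using comp bC xX
        by (simp add: nat_pow_mult[symmetric] mult_2)
      then show ?thesis unfolding y_def using iso bC zX qX by simp
    qed
    have "d y (q 0) + d y (q (2*m)) \<le> 2 * S m + 2*\<delta>"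
      using fp m unfolding e1 e2 e3 e4 by linarith
    then obtain jj where jj: "d y (q jj) \<le> Cc" using C.crossing[OF S12 yX] unfolding Cc_def by blast
    define t where "t = - int jj + int m"
    have bt: "b [^] t = inv (b [^] jj) \<otimes> b [^] m"
      unfolding t_def using int_pow_mult[OF bC] int_pow_neg_int[OF bC] int_pow_int by metis
    have "\<phi> (b [^] t \<otimes> f [^] i) x = \<phi> (inv (b [^] jj)) y"
      unfolding bt y_def z_def using comp bC fC xX phiX by (simp add: m_assoc)
    then have "d x (\<phi> (b [^] t \<otimes> f [^] i) x) = d (q jj) y"
    proof -
      assume e: "\<phi> (b [^] t \<otimes> f [^] i) x = \<phi> (inv (b [^] jj)) y"
      have "d x (\<phi> (inv (b [^] jj)) y) = d (\<phi> (b [^] jj) x) (\<phi> (b [^] jj) (\<phi> (inv (b [^] jj)) y))"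
        using iso bC xX yX phiX by simp
      also have "\<phi> (b [^] jj) (\<phi> (inv (b [^] jj)) y) = y"
        using comp[of "b [^] jj" "inv (b [^] jj)" y] bC yX phi1 by simp
      finally show ?thesis using e q_def by simp
    qed
    then show ?thesis using jj H.dcom by metis
  qed
  have "\<forall>i::nat. \<exists>t::int. d x (\<phi> (b [^] t \<otimes> f [^] i) x) \<le> Cc" using near by blast
  from choice[OF this] obtain T :: "nat \<Rightarrow> int" where T: "\<And>i::nat. d x (\<phi> (b [^] T i \<otimes> f [^] i) x) \<le> Cc"
    by blast
  define r where "r = nat \<lceil>Cc\<rceil>"
  have Cr: "Cc \<le> real r" unfolding r_def by (simp add: real_nat_ceiling_ge)
  obtain R N0 where RN: "\<forall>x\<in>X. \<forall>y\<in>X. d x y \<ge> real R \<longrightarrow>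
        (let S = {g \<in> carrier G. max (d x (\<phi> g x)) (d y (\<phi> g y)) \<le> real r}
         in finite S \<and> card S \<le> N0)"
    using ac unfolding acylindrical_def by blast
  obtain M::nat where M: "real R \<le> S M"
    using Ubig[OF N1, of "real R"] unfolding S_def q_def b_def by blast
  define SS where "SS = {g \<in> carrier G. max (d x (\<phi> g x)) (d (q M) (\<phi> g (q M))) \<le> real r}"
  have SS: "finite SS" "card SS \<le> N0"
    using RN xX qX[of M] M unfolding SS_def S_def Let_def by auto
  define EE where "EE i = b [^] T i \<otimes> f [^] i" for i :: nat
  have EC: "EE i \<in> carrier G" for i unfolding EE_def using bC fC by simp
  have EM: "EE i \<otimes> b [^] M = b [^] M \<otimes> EE i" for i
  proof -
    have c1: "b [^] T i \<otimes> b [^] M = b [^] M \<otimes> b [^] T i"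
      using int_pow_mult[OF bC, of "T i" "int M"] int_pow_mult[OF bC, of "int M" "T i"]
      by (simp add: int_pow_int add.commute)
    show ?thesis unfolding EE_def using c1 fbk[of i M] bC fC by (metis m_assoc int_pow_closed nat_pow_closed)
  qed
  have ES: "EE i \<in> SS" for i
  proof -
    have "\<phi> (EE i) (q M) = \<phi> (b [^] M) (\<phi> (EE i) x)"
      unfolding q_def using comp EC bC xX EM by (metis nat_pow_closed)
    then have "d (q M) (\<phi> (EE i) (q M)) = d x (\<phi> (EE i) x)"
      unfolding q_def using iso bC xX phiX EC by simp
    then show ?thesis unfolding SS_def using EC T[of i] Cr unfolding EE_def by simp
  qed
  have "\<not> inj_on EE {0..N0}"
  proof
    assume "inj_on EE {0..N0}"
    then have "card (EE ` {0..N0}) = N0 + 1" by (simp add: card_image)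
    moreover have "card (EE ` {0..N0}) \<le> card SS" using ES SS(1) by (intro card_mono) auto
    ultimately show False using SS(2) by simp
  qed
  then obtain i i' where ii: "i < i'" "EE i = EE i'"
    unfolding inj_on_def by (metis linorder_neqE_nat)
  define p where "p = i' - i"
  have p1: "p \<ge> 1" using ii unfolding p_def by simp
  have bTi: "b [^] T i \<in> carrier G" "b [^] T i' \<in> carrier G" using bC by auto
  have fi': "f [^] i' = f [^] p \<otimes> f [^] i" using fC ii unfolding p_def by (simp add: nat_pow_mult)
  have "b [^] T i \<otimes> f [^] i = (b [^] T i' \<otimes> f [^] p) \<otimes> f [^] i"
    using ii(2) fi' bTi fC unfolding EE_def by (simp add: m_assoc)
  then have "b [^] T i = b [^] T i' \<otimes> f [^] p" using bTi fC by (simp add: right_cancel)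
  then have "inv (b [^] T i') \<otimes> b [^] T i = f [^] p"
    using bTi fC by (simp add: m_assoc[symmetric])
  moreover have "inv (b [^] T i') \<otimes> b [^] T i = b [^] (- T i' + T i)"
    using int_pow_mult[OF bC, of "- T i'" "T i"] int_pow_neg[OF bC] by simp
  ultimately have wt: "f [^] p = b [^] (- T i' + T i)" by simp
  define w where "w = f [^] p"
  have wC: "w \<in> carrier G" unfolding w_def using fC by simp
  have f2: "f = h [^] (2::nat)" unfolding f_def using hC by (simp add: numeral_2_eq_2)
  have hk: "h \<otimes> h [^] k = h [^] k \<otimes> h" for k :: nat
    using hC by (simp add: nat_pow_Suc2[symmetric])
  have "w = h [^] (2 * p)" unfolding w_def f2 using hC by (simp add: nat_pow_pow)
  then have "h \<otimes> w \<otimes> inv h = w" using hk[of "2*p"] hC by (simp add: m_assoc)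
  moreover have "h \<otimes> w \<otimes> inv h = inv w" unfolding w_def wt by (rule hbt)
  ultimately have "w \<otimes> w = \<one>" using wC by (metis r_inv)
  then have "w [^] (2::nat) = \<one>" using wC by (simp add: numeral_2_eq_2)
  then have "w = \<one>" using torsion_one[OF tf wC] by simp
  then have "f = \<one>" using torsion_one[OF tf fC, of p] p1 unfolding w_def by simp
  then have "h = \<one>" using torsion_one[OF tf hC, of 2] f2 by simp
  then have "g [^] n = inv (g [^] n)" using hc gnC by simp
  then have "g [^] n \<otimes> g [^] n = \<one>" using gnC by (metis r_inv)
  then have "(g [^] n) [^] (2::nat) = \<one>" using gnC by (simp add: numeral_2_eq_2)
  then have "g [^] n = \<one>" using torsion_one[OF tf gnC] by simp
  then have "g = \<one>" using torsion_one[OF tf gC] n1 by simp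
  then show False using gne by simp
qed


theorem lemma2p8:
  fixes G :: "('g, 'm) monoid_scheme"
    and X :: "'b set" and d :: "'b \<Rightarrow> 'b \<Rightarrow> real" and \<phi> :: "'g \<Rightarrow> 'b \<Rightarrow> 'b"
    and g :: 'g
  assumes "group G"
    and "torsion_free G"
    and "gromov_hyperbolic X d"
    and "isometric_action G X d \<phi>"
    and "acylindrical G X d \<phi>"
    and "non_elementary G X d \<phi>"
    and "loxodromic G X d \<phi> g"
  shows "chiral G g"
proof (unfold chiral_def, rule notI)
  assume "\<exists>n::nat. n \<ge> 1 \<and> (\<exists>h\<in>carrier G.
      h \<otimes>\<^bsub>G\<^esub> (g [^]\<^bsub>G\<^esub> n) \<otimes>\<^bsub>G\<^esub> inv\<^bsub>G\<^esub> h = inv\<^bsub>G\<^esub> (g [^]\<^bsub>G\<^esub> n))"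
  then obtain n h where n1: "n \<ge> 1" and hC: "h \<in> carrier G"
    and hc: "h \<otimes>\<^bsub>G\<^esub> (g [^]\<^bsub>G\<^esub> n) \<otimes>\<^bsub>G\<^esub> inv\<^bsub>G\<^esub> h = inv\<^bsub>G\<^esub> (g [^]\<^bsub>G\<^esub> (n::nat))"
    by blast
  show False
    by (rule group.main_helper[OF assms(1) assms(2) assms(3) assms(4) assms(5) assms(7) n1 hC hc])
qed

end
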